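(* Let $S$ be a semidomain that is additively reduced, additively Furstenberg, and satisfies $\mathscr{A}_+(S)=S^\times$, and let $G$ be a torsion-free abelian group. Let $f=s_0x^{g_0}+s_1x^{g_1}\in S[G]$ with $s_0,s_1\in S\setminus\{0\}$ and $g_0>g_1$ in $G$. Then: (1) if $s_0\in S^\times$ or $s_1\in S^\times$, then $f$ is irreducible; (2) if $s_0\notin S^\times$ and $s_1\notin S^\times$, then $f$ is the sum of two irreducible elements of $S[G]$.
   Context: A semidomain is a subsemiring (containing $0$ and $1$) of an integral domain; $S^\times$ is the unit group of the multiplicative monoid $S\setminus\{0\}$. $S$ is additively reduced if $0$ is the only invertible element of $(S,+)$. An additive atom is a nonzero $a\in S$ with $a=b+c$ implying $b=0$ or $c=0$; $\mathscr{A}_+(S)$ is the set of additive atoms. $S$ is additively Furstenberg if every nonzero $s\in S$ equals $a+t$ with $a\in\mathscr{A}_+(S)$, $t\in S$. $G$ carries a fixed total order compatible with addition. $S[G]$ is the semidomain of formal finite sums $\sum_{g\in G}s_gx^g$ with polynomial operations. $f\in S[G]$ is irreducible if it is nonzero, a nonunit, and $f=pq$ implies $p$ or $q$ is a unit of $S[G]$. *)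

theory Defs
  imports Main "HOL-Library.Poly_Mapping"
begin

definition semidomain :: "'a::idom set \<Rightarrow> bool" where
  "semidomain S \<longleftrightarrow> 0 \<in> S \<and> 1 \<in> S \<and>
     (\<forall>a\<in>S. \<forall>b\<in>S. a + b \<in> S) \<and> (\<forall>a\<in>S. \<forall>b\<in>S. a * b \<in> S)"

definition sunits :: "'a::idom set \<Rightarrow> 'a set" where
  "sunits S = {u \<in> S - {0}. \<exists>v\<in>S - {0}. u * v = 1}"

definition add_reduced :: "'a::idom set \<Rightarrow> bool" where
  "add_reduced S \<longleftrightarrow> (\<forall>a\<in>S. (\<exists>b\<in>S. a + b = 0) \<longrightarrow> a = 0)"

definition add_atoms :: "'a::idom set \<Rightarrow> 'a set" where
  "add_atoms S = {a \<in> S. a \<noteq> 0 \<and> (\<forall>b\<in>S. \<forall>c\<in>S. a = b + c \<longrightarrow> b = 0 \<or> c = 0)}"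

definition add_furstenberg :: "'a::idom set \<Rightarrow> bool" where
  "add_furstenberg S \<longleftrightarrow> (\<forall>s\<in>S - {0}. \<exists>a\<in>add_atoms S. \<exists>t\<in>S. s = a + t)"

definition torsion_free :: "'g::ab_group_add itself \<Rightarrow> bool" where
  "torsion_free _ \<longleftrightarrow> (\<forall>(g::'g) (n::nat). n > 0 \<longrightarrow> (\<Sum>i<n. g) = 0 \<longrightarrow> g = 0)"

text \<open>The semigroup semidomain S[G]: finitely supported functions G \<Rightarrow> S,
  inside the group algebra (finitely supported maps, with convolution product.\<close>
definition group_semiring :: "'a::idom set \<Rightarrow> ('g::monoid_add \<Rightarrow>\<^sub>0 'a) set" where
  "group_semiring S = {p. \<forall>g. Poly_Mapping.lookup p g \<in> S}"

definition gs_unit :: "'a::idom set \<Rightarrow> ('g::monoid_add \<Rightarrow>\<^sub>0 'a) \<Rightarrow> bool" where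
  "gs_unit S u \<longleftrightarrow> u \<in> group_semiring S \<and> (\<exists>v\<in>group_semiring S. u * v = 1)"

definition gs_irreducible :: "'a::idom set \<Rightarrow> ('g::monoid_add \<Rightarrow>\<^sub>0 'a) \<Rightarrow> bool" where
  "gs_irreducible S f \<longleftrightarrow> f \<in> group_semiring S \<and> f \<noteq> 0 \<and> \<not> gs_unit S f \<and>
     (\<forall>p\<in>group_semiring S. \<forall>q\<in>group_semiring S. f = p * q \<longrightarrow> gs_unit S p \<or> gs_unit S q)"

end

theory Submission
  imports Defs
begin

lemma lookup_mult_grp:
  fixes p q :: "'g::ab_group_add \<Rightarrow>\<^sub>0 'a::comm_semiring_0"
  shows "Poly_Mapping.lookup (p * q) k =
     (\<Sum>l\<in>Poly_Mapping.keys p. Poly_Mapping.lookup p l * Poly_Mapping.lookup q (k - l))"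
proof -
  have inner: "(\<Sum>r. Poly_Mapping.lookup q r when k = l + r) = Poly_Mapping.lookup q (k - l)" for l
  proof -
    have "\<And>r. (k = l + r) = (r = k - l)" by (auto simp: algebra_simps)
    then show ?thesis by simp
  qed
  have "Poly_Mapping.lookup (p * q) k = (\<Sum>l. Poly_Mapping.lookup p l * Poly_Mapping.lookup q (k - l))"
    by (simp add: lookup_mult inner)
  also have "\<dots> = (\<Sum>l\<in>Poly_Mapping.keys p. Poly_Mapping.lookup p l * Poly_Mapping.lookup q (k - l))"
    by (rule Sum_any.expand_superset) (auto simp: in_keys_iff)
  finally show ?thesis .
qed

lemma sum_in_S:
  assumes "semidomain S" "finite A" "\<And>x. x \<in> A \<Longrightarrow> h x \<in> S"
  shows "sum h A \<in> S"
  using assms(2,3)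
proof (induction A rule: finite_induct)
  case empty then show ?case using assms(1) by (simp add: semidomain_def)
next
  case (insert x F) then show ?case using assms(1) by (simp add: semidomain_def)
qed

lemma sum_zero_S:
  assumes "semidomain S" "add_reduced S" "finite A" "\<And>x. x \<in> A \<Longrightarrow> h x \<in> S" "sum h A = 0"
  shows "\<forall>x\<in>A. h x = 0"
  using assms(3,4,5)
proof (induction A rule: finite_induct)
  case empty then show ?case by simp
next
  case (insert x F)
  have sF: "sum h F \<in> S" using sum_in_S[OF assms(1) insert(1)] insert(4) by auto
  have e: "h x + sum h F = 0" using insert by simp
  have hx: "h x = 0" using assms(2) e sF insert(4) unfolding add_reduced_def by auto
  with e have "sum h F = 0" by simp
  with insert hx show ?case by auto
qed

lemma keys_mult_S:
  fixes p q :: "'g::ab_group_add \<Rightarrow>\<^sub>0 'a::idom"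
  assumes "semidomain S" "add_reduced S" "p \<in> group_semiring S" "q \<in> group_semiring S"
    "a \<in> Poly_Mapping.keys p" "b \<in> Poly_Mapping.keys q"
  shows "a + b \<in> Poly_Mapping.keys (p * q)"
proof (rule ccontr)
  assume "a + b \<notin> Poly_Mapping.keys (p * q)"
  then have z: "(\<Sum>l\<in>Poly_Mapping.keys p. Poly_Mapping.lookup p l * Poly_Mapping.lookup q (a + b - l)) = 0"
    by (simp add: lookup_mult_grp in_keys_iff)
  have "\<forall>l\<in>Poly_Mapping.keys p. Poly_Mapping.lookup p l * Poly_Mapping.lookup q (a + b - l) = 0"
    by (rule sum_zero_S[OF assms(1,2) finite_keys _ z])
       (use assms(1,3,4) in \<open>auto simp: semidomain_def group_semiring_def\<close>)
  then have "Poly_Mapping.lookup p a * Poly_Mapping.lookup q b = 0" using assms(5) by auto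
  then show False using assms(5,6) by (simp add: in_keys_iff)
qed

lemma single_factor_unit:
  fixes p q :: "'g::ab_group_add \<Rightarrow>\<^sub>0 'a::idom"
  assumes "semidomain S" "p \<in> group_semiring S" "q \<in> group_semiring S"
    "Poly_Mapping.keys p = {a}" "c \<in> sunits S" "Poly_Mapping.lookup (p * q) h = c"
  shows "gs_unit S p"
proof -
  define s where "s = Poly_Mapping.lookup p a"
  have pe: "p = Poly_Mapping.single a s"
    by (rule poly_mapping_eqI) (use assms(4) in \<open>auto simp: s_def lookup_single when_def in_keys_iff\<close>)
  have "c = s * Poly_Mapping.lookup q (h - a)"
    using assms(4,6) by (simp add: lookup_mult_grp s_def)
  obtain w where w: "w \<in> S" "c * w = 1" using assms(5) by (auto simp: sunits_def)
  define t where "t = Poly_Mapping.lookup q (h - a) * w"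
  have tS: "t \<in> S" using assms(1,3) w unfolding t_def semidomain_def group_semiring_def by auto
  have st: "s * t = 1" using \<open>c = _\<close> w unfolding t_def by (simp add: mult.assoc)
  have "p * Poly_Mapping.single (- a) t = 1"
    by (simp add: pe mult_single st)
  moreover have "Poly_Mapping.single (- a) t \<in> group_semiring S"
    using tS assms(1) by (auto simp: group_semiring_def lookup_single when_def semidomain_def)
  ultimately show ?thesis using assms(2) unfolding gs_unit_def by blast
qed

lemma binom_in_S:
  assumes "semidomain S" "c0 \<in> S" "c1 \<in> S"
  shows "Poly_Mapping.single h0 c0 + Poly_Mapping.single h1 c1 \<in> group_semiring S"
  using assms by (auto simp: group_semiring_def lookup_add lookup_single when_def semidomain_def)

lemma binom_keys:
  assumes "c0 \<noteq> 0" "c1 \<noteq> 0" "h0 \<noteq> h1"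
  shows "Poly_Mapping.keys (Poly_Mapping.single h0 c0 + Poly_Mapping.single h1 c1) = {h0, h1}"
  using assms by (auto simp: in_keys_iff lookup_add lookup_single when_def split: if_splits)

lemma binom_irred:
  fixes S :: "'a::idom set" and h0 h1 :: "'g::linordered_ab_group_add"
  assumes S: "semidomain S" and R: "add_reduced S"
    and c: "c0 \<in> S - {0}" "c1 \<in> S - {0}" and h: "h0 \<noteq> h1"
    and u: "c0 \<in> sunits S \<or> c1 \<in> sunits S"
  shows "gs_irreducible S (Poly_Mapping.single h0 c0 + Poly_Mapping.single h1 c1)"
proof -
  define F where "F = Poly_Mapping.single h0 c0 + Poly_Mapping.single h1 c1"
  have FS: "F \<in> group_semiring S" unfolding F_def using binom_in_S[OF S] c by auto
  have kF: "Poly_Mapping.keys F = {h0, h1}" unfolding F_def using binom_keys[of c0 c1 h0 h1] c h by auto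
  have F0: "F \<noteq> 0" using kF by auto
  have lF0: "Poly_Mapping.lookup F h0 = c0" and lF1: "Poly_Mapping.lookup F h1 = c1"
    unfolding F_def using h by (auto simp: lookup_add lookup_single when_def)
  have nu: "\<not> gs_unit S F"
  proof
    assume "gs_unit S F"
    then obtain v where v: "v \<in> group_semiring S" "F * v = 1" by (auto simp: gs_unit_def)
    have "v \<noteq> 0" using v(2) by auto
    then obtain b where b: "b \<in> Poly_Mapping.keys v" by (metis all_not_in_conv keys_eq_empty)
    have "h0 + b \<in> Poly_Mapping.keys (F * v)" "h1 + b \<in> Poly_Mapping.keys (F * v)"
      using keys_mult_S[OF S R FS v(1) _ b] kF by auto
    then have "h0 + b = h1 + b" using v(2) by simp
    then show False using h by simp
  qed
  have fac: "gs_unit S p \<or> gs_unit S q"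
    if pS: "p \<in> group_semiring S" and qS: "q \<in> group_semiring S" and e: "F = p * q" for p q
  proof -
    have single_case: "gs_unit S x" if xS: "x \<in> group_semiring S" and yS: "y \<in> group_semiring S"
      and kx: "Poly_Mapping.keys x = {a}" and exy: "F = x * y" for x y a
    proof (cases "c0 \<in> sunits S")
      case True
      show ?thesis by (rule single_factor_unit[OF S xS yS kx True, of h0]) (use lF0 exy in simp)
    next
      case False
      then have "c1 \<in> sunits S" using u by auto
      show ?thesis by (rule single_factor_unit[OF S xS yS kx \<open>c1 \<in> sunits S\<close>, of h1]) (use lF1 exy in simp)
    qed
    have p0: "p \<noteq> 0" and q0: "q \<noteq> 0" using F0 e by auto
    then obtain a b where a: "a \<in> Poly_Mapping.keys p" and b: "b \<in> Poly_Mapping.keys q"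
      by (metis all_not_in_conv keys_eq_empty)
    show ?thesis
    proof (cases "Poly_Mapping.keys p = {a}")
      case True then show ?thesis using single_case[OF pS qS True e] by blast
    next
      case False
      then obtain a' where a': "a' \<in> Poly_Mapping.keys p" "a' \<noteq> a" using a by blast
      show ?thesis
      proof (cases "Poly_Mapping.keys q = {b}")
        case True then show ?thesis using single_case[OF qS pS True] e by (simp add: mult.commute)
      next
        case False
        then obtain b' where b': "b' \<in> Poly_Mapping.keys q" "b' \<noteq> b" using b by blast
        define a1 where "a1 = min a a'"
        define a2 where "a2 = max a a'"
        define b1 where "b1 = min b b'"
        define b2 where "b2 = max b b'"
        have ka: "a1 \<in> Poly_Mapping.keys p" "a2 \<in> Poly_Mapping.keys p"
          unfolding a1_def a2_def using a a' by (auto simp: min_def max_def)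
        have kb: "b1 \<in> Poly_Mapping.keys q" "b2 \<in> Poly_Mapping.keys q"
          unfolding b1_def b2_def using b b' by (auto simp: min_def max_def)
        have lt: "a1 < a2" "b1 < b2" unfolding a1_def a2_def b1_def b2_def using a' b' by (auto simp: min_def max_def)
        have "a1 + b1 \<in> {h0, h1}" "a2 + b1 \<in> {h0, h1}" "a2 + b2 \<in> {h0, h1}"
          using keys_mult_S[OF S R pS qS] ka kb kF e by auto
        moreover have "a1 + b1 < a2 + b1" "a2 + b1 < a2 + b2" "a1 + b1 < a2 + b2" using lt add_strict_mono by auto
        ultimately show ?thesis by auto
      qed
    qed
  qed
  show ?thesis unfolding F_def[symmetric] gs_irreducible_def using FS F0 nu fac by blast
qed

theorem lemma3p4:
  fixes S :: "'a::idom set"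
    and s0 s1 :: 'a
    and g0 g1 :: "'g::linordered_ab_group_add"
  assumes "semidomain S"
    and "add_reduced S"
    and "add_furstenberg S"
    and "add_atoms S = sunits S"
    and "torsion_free TYPE('g)"
    and "s0 \<in> S - {0}" and "s1 \<in> S - {0}"
    and "g0 > g1"
  defines "f \<equiv> Poly_Mapping.single g0 s0 + Poly_Mapping.single g1 s1"
  shows "(s0 \<in> sunits S \<or> s1 \<in> sunits S \<longrightarrow> gs_irreducible S f)
    \<and> (s0 \<notin> sunits S \<and> s1 \<notin> sunits S \<longrightarrow>
         (\<exists>p q. gs_irreducible S p \<and> gs_irreducible S q \<and> f = p + q))"
proof (intro conjI impI)
  have h: "g0 \<noteq> g1" using assms(8) by auto
  show "gs_irreducible S f" if "s0 \<in> sunits S \<or> s1 \<in> sunits S"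
    unfolding f_def by (rule binom_irred[OF assms(1,2,6,7) h that])
  assume nu: "s0 \<notin> sunits S \<and> s1 \<notin> sunits S"
  obtain a0 t0 where A0: "a0 \<in> add_atoms S" "t0 \<in> S" "s0 = a0 + t0"
    using assms(3,6) unfolding add_furstenberg_def by blast
  obtain a1 t1 where A1: "a1 \<in> add_atoms S" "t1 \<in> S" "s1 = a1 + t1"
    using assms(3,7) unfolding add_furstenberg_def by blast
  have a0: "a0 \<in> S - {0}" "a0 \<in> sunits S" and a1: "a1 \<in> S - {0}" "a1 \<in> sunits S"
    using A0 A1 assms(4) by (auto simp: add_atoms_def)
  have t0: "t0 \<in> S - {0}" using A0 a0 nu by auto
  have t1: "t1 \<in> S - {0}" using A1 a1 nu by auto
  have P: "gs_irreducible S (Poly_Mapping.single g0 a0 + Poly_Mapping.single g1 t1)"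
    by (rule binom_irred[OF assms(1,2) a0(1) t1 h]) (use a0 in simp)
  have Q: "gs_irreducible S (Poly_Mapping.single g0 t0 + Poly_Mapping.single g1 a1)"
    by (rule binom_irred[OF assms(1,2) t0 a1(1) h]) (use a1 in simp)
  have "f = (Poly_Mapping.single g0 a0 + Poly_Mapping.single g1 t1) + (Poly_Mapping.single g0 t0 + Poly_Mapping.single g1 a1)"
    unfolding f_def A0(3) A1(3) by (simp add: single_add algebra_simps)
  then show "\<exists>p q. gs_irreducible S p \<and> gs_irreducible S q \<and> f = p + q" using P Q by blast
qed

end
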